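(* Let $\varepsilon>0$ and let $R_1,\dots,R_n:[d]\to\mathcal Y$ be $\varepsilon$-private randomizers with $\mathcal Y$ finite and $d$ even, and let $|\vec R|_{\neq}$ be the number of distinct randomizers among $R_1,\dots,R_n$. Suppose $d>4(e^{2\varepsilon}-1)^2\ln(12|\mathcal Y|\cdot|\vec R|_{\neq})$. If $H$ is chosen uniformly at random among subsets of $[d]$ of size $d/2$, then with probability at least $5/6$ over $H$: for every $y\in\mathcal Y$ and every $i\in[n]$, $y$ is not $\left((e^{2\varepsilon}-1)\sqrt{\frac4d\ln(12|\mathcal Y|\cdot|\vec R|_{\neq})}\right)$-leaky with respect to $H,R_i$.
   Context: A randomizer $R:[d]\to\mathcal Y$ is a randomized map into a message set $\mathcal Y$; it is $\varepsilon$-private if for all $x,x'\in[d]$ and all $Y\subseteq\mathcal Y$, $\Pr[R(x)\in Y]\le e^{\varepsilon}\Pr[R(x')\in Y]$. $\mathbf U$ is the uniform distribution on $[d]$; for $H\subseteq[d]$, $\mathbf U_H$ is the uniform distribution on $H$; $R(\mathbf U)$ (resp. $R(\mathbf U_H)$) is the distribution of $R(\hat x)$ where $\hat x\sim\mathbf U$ (resp. $\hat x\sim \mathbf U_H$). For $H\subset[d]$ with $|H|=d/2$, a message $y$ is $v$-leaky with respect to $H,R$ if $\left|\ln\frac{\Pr[R(\mathbf U_H)=y]}{\Pr[R(\mathbf U)=y]}\right|>v$ (messages with $\Pr[R(\mathbf U)=y]=0$ are regarded as not leaky). *)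

theory Defs
  imports "HOL-Probability.Probability"
begin

text \<open>The input domain [d] is rendered as {..<d}; a randomizer is a map
  R :: nat \<Rightarrow> 'y pmf, of which only the values on {..<d} matter.
  The finite message set is the finite type 'y.\<close>

definition eps_private :: "real \<Rightarrow> nat \<Rightarrow> (nat \<Rightarrow> 'y pmf) \<Rightarrow> bool" where
  "eps_private \<epsilon> d R \<longleftrightarrow>
     (\<forall>x\<in>{..<d}. \<forall>x'\<in>{..<d}. \<forall>Y.
        measure_pmf.prob (R x) Y \<le> exp \<epsilon> * measure_pmf.prob (R x') Y)"

definition out_prob :: "(nat \<Rightarrow> 'y pmf) \<Rightarrow> nat set \<Rightarrow> 'y \<Rightarrow> real" where
  "out_prob R H y = measure_pmf.prob (pmf_of_set H \<bind> R) {y}"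

text \<open>y is v-leaky w.r.t. H, R (inputs uniform on {..<d}). A message with
  Pr[R(U)=y] = 0 is not leaky; if Pr[R(U_H)=y] = 0 < Pr[R(U)=y] the log-ratio
  is infinite, hence leaky.\<close>
definition leaky :: "real \<Rightarrow> nat \<Rightarrow> nat set \<Rightarrow> (nat \<Rightarrow> 'y pmf) \<Rightarrow> 'y \<Rightarrow> bool" where
  "leaky v d H R y \<longleftrightarrow>
     out_prob R {..<d} y > 0 \<and>
     (out_prob R H y = 0 \<or> \<bar>ln (out_prob R H y / out_prob R {..<d} y)\<bar> > v)"

end

theory Submission
  imports Defs
begin

definition hv :: "nat \<Rightarrow> nat \<Rightarrow> nat set set" where
  "hv d k = {H. H \<subseteq> {..<d} \<and> card H = k}"

lemma hv_finite: "finite (hv d k)"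
  by (rule finite_subset[of _ "Pow {..<d}"]) (auto simp: hv_def)

lemma perm_hv_bij:
  assumes "\<sigma> permutes {..<d}"
  shows "bij_betw ((`) \<sigma>) (hv d k) (hv d k)"
proof (rule bij_betw_byWitness[where f'="(`) (inv \<sigma>)"])
  have inj: "inj \<sigma>" using assms permutes_inj by blast
  have iv: "inv \<sigma> permutes {..<d}" using assms permutes_inv by blast
  have inj2: "inj (inv \<sigma>)" using iv permutes_inj by blast
  show "\<forall>a\<in>hv d k. inv \<sigma> ` \<sigma> ` a = a"
    using assms by (simp add: image_image permutes_inverses(2))
  show "\<forall>a\<in>hv d k. \<sigma> ` inv \<sigma> ` a = a"
    using assms by (simp add: image_image permutes_inverses(1))
  show "(`) \<sigma> ` hv d k \<subseteq> hv d k"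
    using assms inj permutes_image[OF assms]
    by (auto simp: hv_def card_image inj_on_subset)
  show "(`) (inv \<sigma>) ` hv d k \<subseteq> hv d k"
    using iv inj2 permutes_image[OF iv]
    by (auto simp: hv_def card_image inj_on_subset)
qed

lemma swap_sum:
  "(\<Sum>B\<in>hv d k. \<Sum>\<sigma>\<in>{\<sigma>. \<sigma> permutes {..<d}}. F (\<sigma> ` B)) =
     real (card {\<sigma>. \<sigma> permutes {..<d}}) * (\<Sum>H\<in>hv d k. (F H :: real))"
proof -
  have "(\<Sum>B\<in>hv d k. \<Sum>\<sigma>\<in>{\<sigma>. \<sigma> permutes {..<d}}. F (\<sigma> ` B)) =
        (\<Sum>\<sigma>\<in>{\<sigma>. \<sigma> permutes {..<d}}. \<Sum>B\<in>hv d k. F (\<sigma> ` B))"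
    by (rule sum.swap)
  also have "\<dots> = (\<Sum>\<sigma>\<in>{\<sigma>. \<sigma> permutes {..<d}}. \<Sum>H\<in>hv d k. F H)"
  proof (rule sum.cong[OF refl])
    fix \<sigma> assume "\<sigma> \<in> {\<sigma>. \<sigma> permutes {..<d}}"
    hence "bij_betw ((`) \<sigma>) (hv d k) (hv d k)" using perm_hv_bij by blast
    thus "(\<Sum>B\<in>hv d k. F (\<sigma> ` B)) = (\<Sum>H\<in>hv d k. F H)"
      by (rule sum.reindex_bij_betw)
  qed
  also have "\<dots> = real (card {\<sigma>. \<sigma> permutes {..<d}}) * (\<Sum>H\<in>hv d k. F H)"
    by simp
  finally show ?thesis .
qed

lemma exists_perm_map:
  assumes "B \<in> hv d k" "B' \<in> hv d k"
  shows "\<exists>\<tau>. \<tau> permutes {..<d} \<and> \<tau> ` B = B'"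
proof -
  let ?D = "{..<d}"
  have BD: "B \<subseteq> ?D" "B' \<subseteq> ?D" "card B = card B'" using assms by (auto simp: hv_def)
  have fin: "finite B" "finite B'" using BD finite_subset by auto
  obtain f where f: "bij_betw f B B'" using finite_same_card_bij[OF fin BD(3)] by blast
  have "card (?D - B) = card (?D - B')" using BD fin by (simp add: card_Diff_subset)
  then obtain g where g: "bij_betw g (?D - B) (?D - B')"
    using finite_same_card_bij[of "?D - B" "?D - B'"] by auto
  define \<tau> where "\<tau> x = (if x \<in> B then f x else if x \<in> ?D then g x else x)" for x
  have t1: "bij_betw \<tau> B B'" using f by (rule bij_betw_cong[THEN iffD1, rotated]) (simp add: \<tau>_def)
  have t2: "bij_betw \<tau> (?D - B) (?D - B')" using g
    by (rule bij_betw_cong[THEN iffD1, rotated]) (simp add: \<tau>_def)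
  have "bij_betw \<tau> (B \<union> (?D - B)) (B' \<union> (?D - B'))"
    by (rule bij_betw_combine[OF t1 t2]) auto
  moreover have "B \<union> (?D - B) = ?D" "B' \<union> (?D - B') = ?D" using BD by auto
  ultimately have "bij_betw \<tau> ?D ?D" by simp
  hence "\<tau> permutes ?D" by (rule bij_imp_permutes) (use BD in \<open>auto simp: \<tau>_def\<close>)
  moreover have "\<tau> ` B = B'" using t1 by (simp add: bij_betw_def)
  ultimately show ?thesis by blast
qed

lemma perm_avg:
  assumes "B \<in> hv d k"
  shows "real (card {\<sigma>. \<sigma> permutes {..<d}}) * (\<Sum>H\<in>hv d k. (F H :: real)) =
         real (card (hv d k)) * (\<Sum>\<sigma>\<in>{\<sigma>. \<sigma> permutes {..<d}}. F (\<sigma> ` B))"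
proof -
  have inv: "(\<Sum>\<sigma>\<in>{\<sigma>. \<sigma> permutes {..<d}}. F (\<sigma> ` B')) = (\<Sum>\<sigma>\<in>{\<sigma>. \<sigma> permutes {..<d}}. F (\<sigma> ` B))"
    if B'h: "B' \<in> hv d k" for B'
  proof -
    obtain \<tau> where t: "\<tau> permutes {..<d}" "\<tau> ` B = B'" using exists_perm_map[OF assms B'h] by blast
    have "(\<Sum>\<sigma>\<in>{\<sigma>. \<sigma> permutes {..<d}}. F (\<sigma> ` B)) = (\<Sum>\<sigma>\<in>{\<sigma>. \<sigma> permutes {..<d}}. F ((\<sigma> \<circ> \<tau>) ` B))"
      by (rule sum_permutations_compose_right[OF t(1)])
    also have "\<dots> = (\<Sum>\<sigma>\<in>{\<sigma>. \<sigma> permutes {..<d}}. F (\<sigma> ` B'))"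
      unfolding t(2)[symmetric] by (simp add: image_image)
    finally show ?thesis by simp
  qed
  have "real (card {\<sigma>. \<sigma> permutes {..<d}}) * (\<Sum>H\<in>hv d k. F H) =
        (\<Sum>B'\<in>hv d k. \<Sum>\<sigma>\<in>{\<sigma>. \<sigma> permutes {..<d}}. F (\<sigma> ` B'))"
    by (rule swap_sum[symmetric])
  also have "\<dots> = (\<Sum>B'\<in>hv d k. \<Sum>\<sigma>\<in>{\<sigma>. \<sigma> permutes {..<d}}. F (\<sigma> ` B))"
    using inv by (rule sum.cong[OF refl])
  also have "\<dots> = real (card (hv d k)) * (\<Sum>\<sigma>\<in>{\<sigma>. \<sigma> permutes {..<d}}. F (\<sigma> ` B))"
    by simp
  finally show ?thesis .
qed

definition cb :: "nat \<Rightarrow> (nat \<Rightarrow> bool) \<Rightarrow> nat set" where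
  "cb m b = (\<lambda>k::nat. 2*k + (if b k then 1 else 0 :: nat)) ` {..<m}"

lemma cb_inj: fixes b :: "nat \<Rightarrow> bool" shows "inj_on (\<lambda>k::nat. 2*k + (if b k then 1 else 0 :: nat)) {..<m}"
  by (rule inj_onI) (auto split: if_splits)

lemma cb_hv: "cb m b \<in> hv (2*m) m"
  unfolding hv_def cb_def using cb_inj[of b m]
  by (auto simp: card_image split: if_splits)

lemma prod_cb: fixes h :: "nat \<Rightarrow> real" shows "(\<Prod>x\<in>cb m b. h x) = (\<Prod>k<m. (h (2*k + (if b k then 1 else 0)) :: real))"
  unfolding cb_def by (subst prod.reindex[OF cb_inj]) simp

lemma sum_coins: fixes h :: "nat \<Rightarrow> real" and m :: nat shows
  "(\<Sum>b\<in>PiE {..<m} (\<lambda>_. UNIV). \<Prod>k<m. (h (2*k + (if b k then 1 else 0)) :: real)) =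
   (\<Prod>k<m. h (2*k) + h (2*k+1))"
proof -
  have "(\<Prod>k<m. h (2*k) + h (2*k+1)) = (\<Prod>k<m. \<Sum>c\<in>(UNIV::bool set). h (2*k + (if c then 1 else 0)))"
    by (simp add: UNIV_bool add.commute)
  also have "\<dots> = (\<Sum>b\<in>PiE {..<m} (\<lambda>_. UNIV). \<Prod>k<m. h (2*k + (if b k then 1 else 0)))"
    by (rule prod_sum_PiE) auto
  finally show ?thesis by simp
qed

lemma card_coins: "card (PiE {..<m} (\<lambda>_. UNIV :: bool set)) = 2^m"
  by (simp add: card_PiE)

lemma sum_pairs: fixes h :: "nat \<Rightarrow> real" and m :: nat shows "(\<Sum>k<m. h (2*k) + h (2*k+1)) = (\<Sum>x<2*m. (h x :: real))"
  by (induction m) (simp_all add: add.commute)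

lemma two_point: fixes a b :: real shows "exp a + exp b \<le> 2 * exp ((a+b)/2 + (a-b)^2/8)"
proof -
  have *: "exp a + exp b \<le> 2 * exp ((a+b)/2 + (a-b)^2/8)" if "b \<le> a" for a b :: real
  proof -
    have "-(a-b) * (1/2) + ln (1 + (1/2) * (exp (a-b) - 1)) \<le> (a-b)^2/8"
      using Hoeffdings_lemma_aux[of "a-b" "1/2"] that by simp
    hence "ln ((1 + exp (a-b))/2) \<le> (a-b)/2 + (a-b)^2/8" by (simp add: field_simps)
    hence "exp (ln ((1 + exp (a-b))/2)) \<le> exp ((a-b)/2 + (a-b)^2/8)" by simp
    hence "(1 + exp (a-b))/2 \<le> exp ((a-b)/2 + (a-b)^2/8)"
      by (smt (verit) exp_ln exp_gt_zero)
    hence "exp b * ((1 + exp (a-b))/2) \<le> exp b * exp ((a-b)/2 + (a-b)^2/8)" by simp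
    also have "exp b * ((1 + exp (a-b))/2) = (exp a + exp b)/2"
      by (simp add: field_simps exp_diff)
    also have "exp b * exp ((a-b)/2 + (a-b)^2/8) = exp ((a+b)/2 + (a-b)^2/8)"
      by (simp add: exp_add[symmetric] field_simps)
    finally show ?thesis by simp
  qed
  show ?thesis
  proof (cases "b \<le> a")
    case True thus ?thesis using * by blast
  next
    case False thus ?thesis using *[of a b] by (simp add: add.commute power2_commute)
  qed
qed

lemma mgf:
  fixes f :: "nat \<Rightarrow> real" and m :: nat and l w :: real
  assumes wid: "\<And>x x'. x < 2*m \<Longrightarrow> x' < 2*m \<Longrightarrow> \<bar>f x - f x'\<bar> \<le> w"
  shows "(\<Sum>H\<in>hv (2*m) m. exp (l * (\<Sum>x\<in>H. f x))) \<le>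
         real (card (hv (2*m) m)) * exp (l * (\<Sum>x<2*m. f x) / 2 + m * l^2 * w^2 / 8)"
proof -
  define P where "P = {\<sigma>. \<sigma> permutes {..<2*m}}"
  define C where "C = PiE {..<m} (\<lambda>_. UNIV :: bool set)"
  define g where "g x = exp (l * f x)" for x
  define F where "F H = (\<Prod>x\<in>H. g x)" for H
  define S where "S = (\<Sum>x<2*m. f x)"
  define E where "E = exp (l * S / 2 + m * l^2 * w^2 / 8)"
  have finP: "finite P" unfolding P_def by (rule finite_permutations) simp
  have finC: "finite C" unfolding C_def by (rule finite_PiE) auto
  have cP: "card P > 0" using finP permutes_id[of "{..<2*m}"] unfolding P_def
    by (metis card_gt_0_iff empty_iff mem_Collect_eq)
  have FH: "exp (l * (\<Sum>x\<in>H. f x)) = F H" if "finite H" for H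
    using that unfolding F_def g_def by (simp add: exp_sum sum_distrib_left)
  have finH: "finite H" if "H \<in> hv (2*m) m" for H
    using that finite_subset unfolding hv_def by auto
  have lhs: "(\<Sum>H\<in>hv (2*m) m. exp (l * (\<Sum>x\<in>H. f x))) = (\<Sum>H\<in>hv (2*m) m. F H)"
    using FH finH by (intro sum.cong) auto
  have step1: "real (card P) * (\<Sum>H\<in>hv (2*m) m. F H) =
       real (card (hv (2*m) m)) * (\<Sum>\<sigma>\<in>P. F (\<sigma> ` cb m b))" for b
    unfolding P_def by (rule perm_avg[OF cb_hv])
  have "real (card C) * (real (card P) * (\<Sum>H\<in>hv (2*m) m. F H)) =
        (\<Sum>b\<in>C. real (card P) * (\<Sum>H\<in>hv (2*m) m. F H))" by simp
  also have "\<dots> = (\<Sum>b\<in>C. real (card (hv (2*m) m)) * (\<Sum>\<sigma>\<in>P. F (\<sigma> ` cb m b)))"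
    using step1 by simp
  also have "\<dots> = real (card (hv (2*m) m)) * (\<Sum>\<sigma>\<in>P. \<Sum>b\<in>C. F (\<sigma> ` cb m b))"
    by (simp add: sum_distrib_left[symmetric] sum.swap[of _ C])
  also have "(\<Sum>\<sigma>\<in>P. \<Sum>b\<in>C. F (\<sigma> ` cb m b)) = (\<Sum>\<sigma>\<in>P. \<Prod>k<m. g (\<sigma> (2*k)) + g (\<sigma> (2*k+1)))"
  proof (rule sum.cong[OF refl])
    fix \<sigma> assume "\<sigma> \<in> P"
    hence inj: "inj \<sigma>" unfolding P_def using permutes_inj by blast
    have "F (\<sigma> ` cb m b) = (\<Prod>k<m. g (\<sigma> (2*k + (if b k then 1 else 0))))" for b
      unfolding F_def using inj
      by (simp add: prod.reindex inj_on_subset prod_cb[of "\<lambda>x. g (\<sigma> x)"])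
    thus "(\<Sum>b\<in>C. F (\<sigma> ` cb m b)) = (\<Prod>k<m. g (\<sigma> (2*k)) + g (\<sigma> (2*k+1)))"
      unfolding C_def using sum_coins[of "\<lambda>x. g (\<sigma> x)" m] by simp
  qed
  also have "(\<Sum>\<sigma>\<in>P. \<Prod>k<m. g (\<sigma> (2*k)) + g (\<sigma> (2*k+1))) \<le> (\<Sum>\<sigma>\<in>P. 2^m * E)"
  proof (rule sum_mono)
    fix \<sigma> assume "\<sigma> \<in> P"
    hence perm: "\<sigma> permutes {..<2*m}" unfolding P_def by simp
    have in2: "\<sigma> x < 2*m" if "x < 2*m" for x using permutes_in_image[OF perm] that by simp
    have "(\<Prod>k<m. g (\<sigma> (2*k)) + g (\<sigma> (2*k+1))) \<le>
          (\<Prod>k<m. 2 * exp (l * (f (\<sigma> (2*k)) + f (\<sigma> (2*k+1))) / 2 + l^2 * w^2 / 8))"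
    proof (rule prod_mono)
      fix k assume k: "k \<in> {..<m}"
      have nn: "0 \<le> g (\<sigma> (2*k)) + g (\<sigma> (2*k+1))" unfolding g_def by (simp add: add_nonneg_nonneg)
      have a: "\<bar>f (\<sigma> (2*k)) - f (\<sigma> (2*k+1))\<bar> \<le> w" using k by (intro wid in2) auto
      have "(l * f (\<sigma> (2*k)) - l * f (\<sigma> (2*k+1)))^2 = l^2 * (f (\<sigma> (2*k)) - f (\<sigma> (2*k+1)))^2"
        by (simp add: power_mult_distrib right_diff_distrib[symmetric])
      also have "\<dots> \<le> l^2 * w^2"
        using a by (intro mult_left_mono power2_le_iff_abs_le[THEN iffD2]) (auto intro: order_trans[OF abs_ge_zero a])
      finally have sq: "(l * f (\<sigma> (2*k)) - l * f (\<sigma> (2*k+1)))^2 \<le> l^2 * w^2" .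
      have "g (\<sigma> (2*k)) + g (\<sigma> (2*k+1)) \<le>
            2 * exp ((l * f (\<sigma> (2*k)) + l * f (\<sigma> (2*k+1)))/2 + (l * f (\<sigma> (2*k)) - l * f (\<sigma> (2*k+1)))^2/8)"
        unfolding g_def by (rule two_point)
      also have "\<dots> \<le> 2 * exp (l * (f (\<sigma> (2*k)) + f (\<sigma> (2*k+1))) / 2 + l^2 * w^2 / 8)"
        using sq by (simp add: distrib_left)
      finally show "0 \<le> g (\<sigma> (2*k)) + g (\<sigma> (2*k+1)) \<and> g (\<sigma> (2*k)) + g (\<sigma> (2*k+1)) \<le> 2 * exp (l * (f (\<sigma> (2*k)) + f (\<sigma> (2*k+1))) / 2 + l^2 * w^2 / 8)" using nn by simp
    qed
    also have "\<dots> = 2^m * exp (\<Sum>k<m. l * (f (\<sigma> (2*k)) + f (\<sigma> (2*k+1))) / 2 + l^2 * w^2 / 8)"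
      by (simp add: prod.distrib exp_sum)
    also have "(\<Sum>k<m. l * (f (\<sigma> (2*k)) + f (\<sigma> (2*k+1))) / 2 + l^2 * w^2 / 8) =
               l / 2 * (\<Sum>k<m. f (\<sigma> (2*k)) + f (\<sigma> (2*k+1))) + m * l^2 * w^2 / 8"
      by (simp add: sum.distrib sum_distrib_left sum_divide_distrib[symmetric] distrib_left add_divide_distrib)
    also have "(\<Sum>k<m. f (\<sigma> (2*k)) + f (\<sigma> (2*k+1))) = (\<Sum>x<2*m. f (\<sigma> x))"
      by (rule sum_pairs)
    also have "(\<Sum>x<2*m. f (\<sigma> x)) = S"
      unfolding S_def using sum.reindex_bij_betw[OF permutes_imp_bij[OF perm], of f] by simp
    finally show "(\<Prod>k<m. g (\<sigma> (2*k)) + g (\<sigma> (2*k+1))) \<le> 2^m * E"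
      unfolding E_def by simp
  qed
  finally have "real (card C) * (real (card P) * (\<Sum>H\<in>hv (2*m) m. F H)) \<le>
                 real (card (hv (2*m) m)) * (real (card P) * (2^m * E))"
    by (simp add: mult_left_mono)
  moreover have "card C = 2^m" unfolding C_def by (rule card_coins)
  ultimately have "(2::real)^m * (real (card P) * (\<Sum>H\<in>hv (2*m) m. F H)) \<le> 2^m * (real (card P) * (real (card (hv (2*m) m)) * E))"
    by (simp add: algebra_simps)
  hence "real (card P) * (\<Sum>H\<in>hv (2*m) m. F H) \<le> real (card P) * (real (card (hv (2*m) m)) * E)"
    by (rule mult_left_le_imp_le) simp
  hence "(\<Sum>H\<in>hv (2*m) m. F H) \<le> real (card (hv (2*m) m)) * E" using cP by simp
  thus ?thesis unfolding lhs E_def S_def .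
qed

lemma tail_upper:
  fixes f :: "nat \<Rightarrow> real" and m :: nat and w s :: real
  assumes wid: "\<And>x x'. x < 2*m \<Longrightarrow> x' < 2*m \<Longrightarrow> \<bar>f x - f x'\<bar> \<le> w"
    and w: "w > 0" and m: "m > 0" and s: "s \<ge> 0"
  shows "real (card {H\<in>hv (2*m) m. s \<le> (\<Sum>x\<in>H. f x) - (\<Sum>x<2*m. f x) / 2})
         \<le> real (card (hv (2*m) m)) * exp (- 2 * s^2 / (m * w^2))"
proof -
  define S where "S = (\<Sum>x<2*m. f x)"
  define l where "l = 4 * s / (m * w^2)"
  define A where "A = {H\<in>hv (2*m) m. s \<le> (\<Sum>x\<in>H. f x) - S / 2}"
  have l0: "l \<ge> 0" unfolding l_def using s w m by simp
  have finA: "finite A" unfolding A_def using hv_finite by simp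
  have "real (card A) = (\<Sum>H\<in>A. 1)" by simp
  also have "\<dots> \<le> (\<Sum>H\<in>A. exp (l * (\<Sum>x\<in>H. f x)) * exp (- l * S / 2 - l * s))"
  proof (rule sum_mono)
    fix H assume "H \<in> A"
    hence "0 \<le> l * ((\<Sum>x\<in>H. f x) - S / 2 - s)" unfolding A_def using l0 by simp
    hence "1 \<le> exp (l * ((\<Sum>x\<in>H. f x) - S / 2 - s))" by simp
    also have "\<dots> = exp (l * (\<Sum>x\<in>H. f x)) * exp (- l * S / 2 - l * s)"
      by (simp add: exp_add[symmetric] algebra_simps)
    finally show "1 \<le> exp (l * (\<Sum>x\<in>H. f x)) * exp (- l * S / 2 - l * s)" .
  qed
  also have "\<dots> \<le> (\<Sum>H\<in>hv (2*m) m. exp (l * (\<Sum>x\<in>H. f x)) * exp (- l * S / 2 - l * s))"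
    by (rule sum_mono2) (auto simp: A_def hv_finite)
  also have "\<dots> = (\<Sum>H\<in>hv (2*m) m. exp (l * (\<Sum>x\<in>H. f x))) * exp (- l * S / 2 - l * s)"
    by (simp add: sum_distrib_right)
  also have "\<dots> \<le> real (card (hv (2*m) m)) * exp (l * S / 2 + m * l^2 * w^2 / 8) * exp (- l * S / 2 - l * s)"
    using mgf[OF wid, where l=l] unfolding S_def by (intro mult_right_mono) auto
  also have "\<dots> = real (card (hv (2*m) m)) * exp (m * l^2 * w^2 / 8 - l * s)"
    by (simp add: mult.assoc exp_add[symmetric])
  also have "m * l^2 * w^2 / 8 - l * s = - 2 * s^2 / (m * w^2)"
    unfolding l_def using w m by (simp add: field_simps power2_eq_square)
  finally show ?thesis unfolding A_def S_def .
qed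

lemma tail_two:
  fixes f :: "nat \<Rightarrow> real" and m :: nat and w s :: real
  assumes wid: "\<And>x x'. x < 2*m \<Longrightarrow> x' < 2*m \<Longrightarrow> \<bar>f x - f x'\<bar> \<le> w"
    and w: "w > 0" and m: "m > 0" and s: "s \<ge> 0"
  shows "real (card {H\<in>hv (2*m) m. s \<le> \<bar>(\<Sum>x\<in>H. f x) - (\<Sum>x<2*m. f x) / 2\<bar>})
         \<le> 2 * real (card (hv (2*m) m)) * exp (- 2 * s^2 / (m * w^2))"
proof -
  have wid': "\<bar>(- f x) - (- f x')\<bar> \<le> w" if "x < 2*m" "x' < 2*m" for x x'
    using wid[OF that(2,1)] by simp
  have "{H\<in>hv (2*m) m. s \<le> \<bar>(\<Sum>x\<in>H. f x) - (\<Sum>x<2*m. f x) / 2\<bar>} \<subseteq>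
        {H\<in>hv (2*m) m. s \<le> (\<Sum>x\<in>H. f x) - (\<Sum>x<2*m. f x) / 2} \<union>
        {H\<in>hv (2*m) m. s \<le> (\<Sum>x\<in>H. - f x) - (\<Sum>x<2*m. - f x) / 2}"
    by (auto simp: sum_negf sum_divide_distrib[symmetric] abs_if)
  hence "card {H\<in>hv (2*m) m. s \<le> \<bar>(\<Sum>x\<in>H. f x) - (\<Sum>x<2*m. f x) / 2\<bar>} \<le>
        card {H\<in>hv (2*m) m. s \<le> (\<Sum>x\<in>H. f x) - (\<Sum>x<2*m. f x) / 2} +
        card {H\<in>hv (2*m) m. s \<le> (\<Sum>x\<in>H. - f x) - (\<Sum>x<2*m. - f x) / 2}"
  proof -
    have fin: "finite (hv (2*m) m)" by (rule hv_finite)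
    show ?thesis
      by (rule order_trans[OF card_mono[OF _ \<open>_ \<subseteq> _\<close>] card_Un_le]) (use fin in simp)
  qed
  hence "real (card {H\<in>hv (2*m) m. s \<le> \<bar>(\<Sum>x\<in>H. f x) - (\<Sum>x<2*m. f x) / 2\<bar>}) \<le>
        real (card {H\<in>hv (2*m) m. s \<le> (\<Sum>x\<in>H. f x) - (\<Sum>x<2*m. f x) / 2}) +
        real (card {H\<in>hv (2*m) m. s \<le> (\<Sum>x\<in>H. - f x) - (\<Sum>x<2*m. - f x) / 2})"
    by linarith
  also have "\<dots> \<le> real (card (hv (2*m) m)) * exp (- 2 * s^2 / (m * w^2)) +
                  real (card (hv (2*m) m)) * exp (- 2 * s^2 / (m * w^2))"
    by (intro add_mono tail_upper[OF wid w m s] tail_upper[OF wid' w m s])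
  finally show ?thesis by simp
qed

lemma ln_abs_bound:
  fixes x :: real
  assumes "\<bar>x - 1\<bar> \<le> 1/2"
  shows "\<bar>ln x\<bar> \<le> 2 * \<bar>x - 1\<bar>"
proof -
  have x: "x \<ge> 1/2" using assms by linarith
  have a: "ln x \<le> x - 1" using x by (intro ln_le_minus_one) simp
  have "ln (1/x) \<le> 1/x - 1" using x by (intro ln_le_minus_one) simp
  hence b: "- ln x \<le> (1 - x) / x" using x by (simp add: ln_div field_simps)
  have "(1 - x) / x \<le> 2 * \<bar>x - 1\<bar>"
  proof (cases "x \<ge> 1")
    case True
    hence "(1 - x) / x \<le> 0" by (simp add: divide_nonpos_pos)
    thus ?thesis by (smt (verit) abs_ge_zero)
  next
    case False
    hence "(1 - x) / x \<le> (1 - x) / (1/2)" using x by (intro divide_left_mono) auto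
    thus ?thesis using False by simp
  qed
  thus ?thesis using a b by (smt (verit))
qed

lemma out_prob_eq:
  assumes "finite H" "H \<noteq> {}"
  shows "out_prob R H y = (\<Sum>x\<in>H. pmf (R x) y) / real (card H)"
  unfolding out_prob_def measure_pmf_single by (rule pmf_bind_pmf_of_set[OF assms(2,1)])

lemma not_leaky:
  fixes R :: "nat \<Rightarrow> 'y pmf"
  assumes H: "H \<in> hv (2*m) m" and m: "m > 0"
    and t: "t \<le> v/2" "v < 1"
    and cond: "(\<Sum>x<2*m. pmf (R x) y) = 0 \<or>
       \<bar>(\<Sum>x\<in>H. pmf (R x) y) - (\<Sum>x<2*m. pmf (R x) y)/2\<bar> < t * (\<Sum>x<2*m. pmf (R x) y) / 2"
  shows "\<not> leaky v (2*m) H R y"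
proof -
  define S where "S = (\<Sum>x<2*m. pmf (R x) y)"
  define X where "X = (\<Sum>x\<in>H. pmf (R x) y)"
  have HD: "H \<subseteq> {..<2*m}" and cH: "card H = m" using H by (auto simp: hv_def)
  have Hfin: "finite H" using HD finite_subset by blast
  have Hne: "H \<noteq> {}" using cH m by auto
  have opD: "out_prob R {..<2*m} y = S / (2*m)"
    unfolding S_def using m by (subst out_prob_eq) (auto simp: lessThan_empty_iff)
  have opH: "out_prob R H y = X / m"
    unfolding X_def using Hfin Hne cH by (subst out_prob_eq) auto
  have S0: "S \<ge> 0" unfolding S_def by (simp add: sum_nonneg)
  show ?thesis
  proof (cases "S = 0")
    case True thus ?thesis unfolding leaky_def opD by simp
  next
    case False
    hence Sp: "S > 0" using S0 by simp
    have c: "\<bar>X - S/2\<bar> < t * S / 2" using cond False unfolding S_def X_def by simp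
    define r where "r = X / m / (S / (2*m))"
    have r: "r = 2 * X / S" unfolding r_def using m by (simp add: field_simps)
    have "\<bar>r - 1\<bar> = 2 * \<bar>X - S/2\<bar> / S"
    proof -
      have "r - 1 = 2 * (X - S/2) / S" unfolding r using Sp by (simp add: field_simps)
      moreover have "\<bar>2 * (X - S/2)\<bar> = 2 * \<bar>X - S/2\<bar>" by (smt (verit))
      ultimately show ?thesis using Sp by (simp only: abs_div) simp
    qed
    also have "\<dots> < t" using c Sp by (simp add: field_simps)
    finally have rt: "\<bar>r - 1\<bar> < t" .
    have "\<bar>r - 1\<bar> \<le> 1/2" using rt t by simp
    hence lnb: "\<bar>ln r\<bar> \<le> 2 * \<bar>r - 1\<bar>" by (rule ln_abs_bound)
    have "r > 0" using \<open>\<bar>r - 1\<bar> \<le> 1/2\<close> by linarith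
    hence "X > 0" unfolding r using Sp by (simp add: zero_less_divide_iff)
    hence "out_prob R H y \<noteq> 0" unfolding opH using m by simp
    moreover have "\<not> \<bar>ln (out_prob R H y / out_prob R {..<2*m} y)\<bar> > v"
      unfolding opH opD r_def[symmetric] using lnb rt t by simp
    ultimately show ?thesis unfolding leaky_def by simp
  qed
qed

theorem mainTheorem5:
  fixes \<epsilon> :: real and d n :: nat and R :: "nat \<Rightarrow> nat \<Rightarrow> 'y::finite pmf"
  assumes "\<epsilon> > 0"
    and "even d"
    and "\<And>i. i < n \<Longrightarrow> eps_private \<epsilon> d (R i)"
    and "real d > 4 * (exp (2 * \<epsilon>) - 1)^2 *
           ln (12 * real CARD('y) * real (card ((\<lambda>i. restrict (R i) {..<d}) ` {..<n})))"
  shows "measure_pmf.prob (pmf_of_set {H. H \<subseteq> {..<d} \<and> card H = d div 2})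
           {H. \<forall>y. \<forall>i<n. \<not> leaky
                ((exp (2 * \<epsilon>) - 1) * sqrt (4 / real d *
                   ln (12 * real CARD('y) * real (card ((\<lambda>i. restrict (R i) {..<d}) ` {..<n})))))
                d H (R i) y}
         \<ge> 5 / 6"
proof -
  define Rs where "Rs = (\<lambda>i. restrict (R i) {..<d}) ` {..<n}"
  define NR where "NR = card Rs"
  define L where "L = ln (12 * real CARD('y) * real NR)"
  define v where "v = (exp (2 * \<epsilon>) - 1) * sqrt (4 / real d * L)"
  define Good where "Good = {H. \<forall>y. \<forall>i<n. \<not> leaky v d H (R i) y}"
  have hypd: "real d > 4 * (exp (2 * \<epsilon>) - 1)^2 * L"
    using assms(4) unfolding L_def NR_def Rs_def .
  show ?thesis
  proof (cases "n = 0")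
    case True
    hence "Good = UNIV" unfolding Good_def by simp
    hence "measure_pmf.prob (pmf_of_set {H. H \<subseteq> {..<d} \<and> card H = d div 2}) Good = 1" by simp
    hence "measure_pmf.prob (pmf_of_set {H. H \<subseteq> {..<d} \<and> card H = d div 2}) Good \<ge> 5/6" by simp
    thus ?thesis unfolding Good_def v_def L_def NR_def Rs_def .
  next
    case False
    hence n: "n > 0" by simp
    have finRs: "finite Rs" unfolding Rs_def by simp
    have "Rs \<noteq> {}" unfolding Rs_def using n by auto
    hence NR1: "NR \<ge> 1" unfolding NR_def using finRs by (simp add: Suc_le_eq card_gt_0_iff)
    have cy: "CARD('y) \<ge> 1" by (simp add: Suc_le_eq)
    have "(1::real) * 1 \<le> real CARD('y) * real NR" using NR1 cy by (intro mult_mono) auto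
    hence Npos: "real CARD('y) * real NR \<ge> 1" by simp
    have Lpos: "L > 0" unfolding L_def using Npos by (intro ln_gt_zero) linarith
    have "4 * (exp (2 * \<epsilon>) - 1)^2 * L \<ge> 0" using Lpos by simp
    hence dpos: "d > 0" using hypd by linarith
    obtain m where dm: "d = 2*m" using assms(2) by (elim evenE)
    have m: "m > 0" using dpos dm by simp
    have hvs: "{H. H \<subseteq> {..<d} \<and> card H = d div 2} = hv d m"
      unfolding hv_def dm by simp
    define c where "c = exp \<epsilon> - exp (- \<epsilon>)"
    have cpos: "c > 0" unfolding c_def using assms(1) by simp
    define t where "t = c * sqrt (L / d)"
    have sq: "sqrt (L / d) ^ 2 = L / d" using Lpos dpos by simp
    have c_le: "c \<le> exp (2 * \<epsilon>) - 1"
      proof -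
        define a where "a = exp \<epsilon>"
        have em: "exp (- \<epsilon>) = 1 / a" unfolding a_def by (simp add: exp_minus inverse_eq_divide)
        have e2: "exp (2 * \<epsilon>) = a * a" unfolding a_def by (simp add: exp_add[symmetric])
        have a1: "a \<ge> 1" unfolding a_def using assms(1) by simp
        have ia: "1 / a \<le> 1" using a1 by simp
        have "0 \<le> (a - 1) * (a - 1 / a)" using a1 ia by (intro mult_nonneg_nonneg) linarith+
        also have "(a - 1) * (a - 1 / a) = a * a - 1 - (a - 1 / a)" using a1 by (simp add: field_simps)
        finally have "a - 1 / a \<le> a * a - 1" by simp
        thus ?thesis unfolding c_def em e2 a_def by simp
      qed
    have v_eq: "v = 2 * ((exp (2 * \<epsilon>) - 1) * sqrt (L / d))"
    proof -
      have s4: "sqrt (4::real) = 2" using real_sqrt_abs[of 2] by simp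
      have "4 / real d * L = 4 * (L / d)" by simp
      hence "sqrt (4 / real d * L) = sqrt 4 * sqrt (L / d)" by (simp only: real_sqrt_mult)
      thus ?thesis unfolding v_def s4 by simp
    qed
    have t_le: "t \<le> v / 2" unfolding v_eq t_def
      using mult_right_mono[OF c_le, of "sqrt (L / d)"] Lpos dpos by simp
    have v_lt: "v < 1"
    proof -
      have e0: "exp (2 * \<epsilon>) - 1 \<ge> 0" using assms(1) by simp
      have "sqrt ((exp (2 * \<epsilon>) - 1)^2 * (4 / real d * L)) = (exp (2 * \<epsilon>) - 1) * sqrt (4 / real d * L)"
        using e0 by (simp only: real_sqrt_mult real_sqrt_abs abs_of_nonneg)
      hence "v = sqrt ((exp (2 * \<epsilon>) - 1)^2 * (4 / real d * L))" unfolding v_def by simp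
      also have "\<dots> < sqrt 1"
      proof (rule real_sqrt_less_mono)
        have "(exp (2 * \<epsilon>) - 1)^2 * (4 / real d * L) = (4 * (exp (2 * \<epsilon>) - 1)^2 * L) / d" by simp
        also have "\<dots> < 1" using hypd dpos by (simp add: divide_less_eq)
        finally show "(exp (2 * \<epsilon>) - 1)^2 * (4 / real d * L) < 1" .
      qed
      finally show ?thesis by simp
    qed
    define Bad where "Bad r y = {H \<in> hv d m. (\<Sum>x<d. pmf (r x) y) \<noteq> 0 \<and>
        t * (\<Sum>x<d. pmf (r x) y) / 2 \<le> \<bar>(\<Sum>x\<in>H. pmf (r x) y) - (\<Sum>x<d. pmf (r x) y) / 2\<bar>}"
      for r :: "nat \<Rightarrow> 'y pmf" and y
    have cardBad: "real (card (Bad r y)) \<le> real (card (hv d m)) / (6 * (real CARD('y) * real NR))"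
      if r: "r \<in> Rs" for r y
    proof -
      obtain i where i: "i < n" "r = restrict (R i) {..<d}" using r unfolding Rs_def by blast
      define p where "p x = pmf (r x) y" for x
      define S where "S = (\<Sum>x<d. p x)"
      show ?thesis
      proof (cases "S = 0")
        case True
        hence "Bad r y = {}" unfolding Bad_def S_def p_def by simp
        thus ?thesis by simp
      next
        case False
        have S0: "S \<ge> 0" unfolding S_def p_def by (simp add: sum_nonneg)
        hence Sp: "S > 0" using False by simp
        have priv: "p x \<le> exp \<epsilon> * p x'" if "x < d" "x' < d" for x x'
        proof -
          have "measure_pmf.prob (R i x) {y} \<le> exp \<epsilon> * measure_pmf.prob (R i x') {y}"
            using assms(3)[OF i(1)] that unfolding eps_private_def by blast
          thus ?thesis unfolding p_def i(2) using that by (simp add: measure_pmf_single)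
        qed
        have diff1: "p x - p x' \<le> c * S / d" if "x < d" "x' < d" for x x'
        proof -
          have "p x - p x' \<le> c * p z" if z: "z < d" for z
          proof -
            have "p x \<le> exp \<epsilon> * p z" by (rule priv[OF \<open>x < d\<close> z])
            moreover have "p z \<le> exp \<epsilon> * p x'" by (rule priv[OF z \<open>x' < d\<close>])
            hence "exp (-\<epsilon>) * p z \<le> exp (-\<epsilon>) * (exp \<epsilon> * p x')" by simp
            hence "exp (-\<epsilon>) * p z \<le> p x'" by (simp add: mult.assoc[symmetric] exp_add[symmetric])
            ultimately show ?thesis unfolding c_def by (simp add: left_diff_distrib)
          qed
          hence "(\<Sum>z<d. p x - p x') \<le> (\<Sum>z<d. c * p z)" by (intro sum_mono) auto
          hence "d * (p x - p x') \<le> c * S" unfolding S_def by (simp add: sum_distrib_left)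
          thus ?thesis using dpos by (simp add: field_simps)
        qed
        have wid: "\<bar>p x - p x'\<bar> \<le> c * S / d" if "x < 2*m" "x' < 2*m" for x x'
          using diff1[of x x'] diff1[of x' x] that unfolding dm by (simp add: abs_le_iff)
        have wpos: "c * S / d > 0" using cpos Sp dpos by simp
        have s0: "t * S / 2 \<ge> 0" unfolding t_def using cpos Sp Lpos dpos by simp
        have "Bad r y \<subseteq> {H\<in>hv (2*m) m. t * S / 2 \<le> \<bar>(\<Sum>x\<in>H. p x) - (\<Sum>x<2*m. p x) / 2\<bar>}"
          unfolding Bad_def S_def p_def dm by auto
        hence "card (Bad r y) \<le> card {H\<in>hv (2*m) m. t * S / 2 \<le> \<bar>(\<Sum>x\<in>H. p x) - (\<Sum>x<2*m. p x) / 2\<bar>}"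
          by (intro card_mono) (simp_all add: hv_finite)
        hence "real (card (Bad r y)) \<le> 2 * real (card (hv (2*m) m)) * exp (- 2 * (t * S / 2)^2 / (m * (c * S / d)^2))"
          using tail_two[where f=p, OF wid wpos m s0] by linarith
        also have "- 2 * (t * S / 2)^2 / (m * (c * S / d)^2) = - L"
          proof -
            have t2: "(t * S / 2)^2 = c^2 * (L / d) * S^2 / 4"
              unfolding t_def by (simp add: power_mult_distrib power_divide sq)
            have w2: "(c * S / d)^2 = c^2 * S^2 / d^2" by (simp add: power_mult_distrib power_divide)
            show ?thesis unfolding t2 w2 using cpos Sp dpos m unfolding dm
              by (simp add: field_simps power2_eq_square)
          qed
        also have "exp (- L) = 1 / (12 * (real CARD('y) * real NR))"
          unfolding L_def using Npos by (simp add: exp_minus mult.assoc inverse_eq_divide)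
        finally show ?thesis unfolding dm by (simp add: mult.commute)
      qed
    qed
    have cover: "hv d m - Good \<subseteq> (\<Union>(y, r)\<in>UNIV \<times> Rs. Bad r y)"
    proof
      fix H assume H: "H \<in> hv d m - Good"
      then obtain y i where i: "i < n" and lk: "leaky v d H (R i) y" unfolding Good_def by blast
      define r where "r = restrict (R i) {..<d}"
      have rR: "r \<in> Rs" unfolding r_def Rs_def using i by blast
      have HD: "H \<subseteq> {..<d}" using H unfolding hv_def by simp
      have e1: "(\<Sum>x<d. pmf (r x) y) = (\<Sum>x<d. pmf (R i x) y)" unfolding r_def by simp
      have e2: "(\<Sum>x\<in>H. pmf (r x) y) = (\<Sum>x\<in>H. pmf (R i x) y)" unfolding r_def
        using HD by (intro sum.cong) auto
      have "\<not> ((\<Sum>x<2*m. pmf (R i x) y) = 0 \<or>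
         \<bar>(\<Sum>x\<in>H. pmf (R i x) y) - (\<Sum>x<2*m. pmf (R i x) y)/2\<bar> < t * (\<Sum>x<2*m. pmf (R i x) y) / 2)"
        using not_leaky[of H m t v "R i" y] H t_le v_lt lk m unfolding dm by auto
      hence "H \<in> Bad r y" using H dm e1 e2 by (auto simp: Bad_def)
      thus "H \<in> (\<Union>(y, r)\<in>UNIV \<times> Rs. Bad r y)" using rR by blast
    qed
    have finhv: "finite (hv d m)" by (rule hv_finite)
    have hvne: "{..<m} \<in> hv d m" unfolding hv_def dm by auto
    hence hvpos: "card (hv d m) > 0" using finhv by (auto simp: card_gt_0_iff)
    have "card (hv d m) \<le> card (hv d m \<inter> Good) + card (\<Union>(y, r)\<in>UNIV \<times> Rs. Bad r y)"
    proof -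
      have "hv d m \<subseteq> (hv d m \<inter> Good) \<union> (\<Union>(y, r)\<in>UNIV \<times> Rs. Bad r y)" using cover by blast
      hence "card (hv d m) \<le> card ((hv d m \<inter> Good) \<union> (\<Union>(y, r)\<in>UNIV \<times> Rs. Bad r y))"
        by (intro card_mono) (auto simp: finRs Bad_def finhv)
      thus ?thesis using card_Un_le le_trans by blast
    qed
    moreover have "card (\<Union>(y, r)\<in>UNIV \<times> Rs. Bad r y) \<le> (\<Sum>(y, r)\<in>UNIV \<times> Rs. card (Bad r y))"
      using card_UN_le[of "UNIV \<times> Rs" "\<lambda>p. Bad (snd p) (fst p)"] finRs by (simp add: split_def)
    ultimately have "real (card (hv d m)) \<le> real (card (hv d m \<inter> Good)) + (\<Sum>(y, r)\<in>UNIV \<times> Rs. real (card (Bad r y)))"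
    proof -
      assume A: "card (hv d m) \<le> card (hv d m \<inter> Good) + card (\<Union>(y, r)\<in>UNIV \<times> Rs. Bad r y)"
        and B: "card (\<Union>(y, r)\<in>UNIV \<times> Rs. Bad r y) \<le> (\<Sum>(y, r)\<in>UNIV \<times> Rs. card (Bad r y))"
      have "card (hv d m) \<le> card (hv d m \<inter> Good) + (\<Sum>(y, r)\<in>UNIV \<times> Rs. card (Bad r y))"
        using A B by linarith
      hence "real (card (hv d m)) \<le> real (card (hv d m \<inter> Good)) + real (\<Sum>(y, r)\<in>UNIV \<times> Rs. card (Bad r y))"
        by (simp only: of_nat_add[symmetric] of_nat_le_iff)
      thus ?thesis by (simp add: of_nat_sum split_def)
    qed
    also have "(\<Sum>(y, r)\<in>UNIV \<times> Rs. real (card (Bad r y))) \<le>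
               (\<Sum>(y::'y, r)\<in>UNIV \<times> Rs. real (card (hv d m)) / (6 * (real CARD('y) * real NR)))"
      by (rule sum_mono) (auto simp: cardBad)
    also have "\<dots> = real (card (hv d m)) / 6"
      using Npos NR1 by (simp add: card_cartesian_product NR_def)
    finally have "real (card (hv d m \<inter> Good)) / real (card (hv d m)) \<ge> 5/6"
      using hvpos by (simp add: field_simps)
    moreover have "measure_pmf.prob (pmf_of_set (hv d m)) Good = real (card (hv d m \<inter> Good)) / real (card (hv d m))"
      using hvne finhv by (intro measure_pmf_of_set) auto
    ultimately have "measure_pmf.prob (pmf_of_set (hv d m)) Good \<ge> 5/6" by simp
    thus ?thesis unfolding hvs[symmetric] Good_def v_def L_def NR_def Rs_def .
  qed
qed

end
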